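(* Let $\xi=(\tau_L,\delta_L,\tau_R,\delta_R)\in\Phi_{\rm BYG}$. Then $m_{\rm crit}>2\delta_R$.
   Context: Let $\Phi=\{\xi\in\mathbb{R}^4: \tau_L>\delta_L+1,\ \delta_L>0,\ \tau_R<-(\delta_R+1),\ \delta_R>0\}$. For $\xi\in\Phi$, the matrix $\begin{bmatrix}\tau_L&1\\-\delta_L&0\end{bmatrix}$ has real eigenvalues $0<\lambda_L^s<1<\lambda_L^u$. Let $\phi(\xi)=\delta_R-\left(\tau_R+\delta_L+\delta_R-(1+\tau_R)\lambda_L^u\right)\lambda_L^u$ and $\Phi_{\rm BYG}=\{\xi\in\Phi:\phi(\xi)>0\}$. Let $m_{\rm crit}=\lambda_L^s+\frac{2\tau_L}{(\lambda_L^u)^2-1}$. *)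

theory Defs
  imports Complex_Main
begin

text \<open>Eigenvalues of the matrix [[tauL, 1], [-deltaL, 0]], i.e. roots of
  lambda^2 - tauL*lambda + deltaL = 0 (real when tauL > deltaL + 1, deltaL > 0).\<close>
definition lamLu :: "real \<Rightarrow> real \<Rightarrow> real" where
  "lamLu tL dL = (tL + sqrt (tL^2 - 4*dL)) / 2"

definition lamLs :: "real \<Rightarrow> real \<Rightarrow> real" where
  "lamLs tL dL = (tL - sqrt (tL^2 - 4*dL)) / 2"

definition Phi :: "(real \<times> real \<times> real \<times> real) set" where
  "Phi = {(tL, dL, tR, dR). tL > dL + 1 \<and> dL > 0 \<and> tR < -(dR + 1) \<and> dR > 0}"

definition phi :: "real \<times> real \<times> real \<times> real \<Rightarrow> real" where
  "phi xi = (case xi of (tL, dL, tR, dR) \<Rightarrow>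
     dR - (tR + dL + dR - (1 + tR) * lamLu tL dL) * lamLu tL dL)"

definition Phi_BYG :: "(real \<times> real \<times> real \<times> real) set" where
  "Phi_BYG = {xi \<in> Phi. phi xi > 0}"

definition m_crit :: "real \<times> real \<times> real \<times> real \<Rightarrow> real" where
  "m_crit xi = (case xi of (tL, dL, tR, dR) \<Rightarrow>
     lamLs tL dL + 2 * tL / ((lamLu tL dL)^2 - 1))"

end

theory Submission
  imports Defs
begin

theorem lemma4p3:
  fixes tL dL tR dR :: real
  assumes "(tL, dL, tR, dR) \<in> Phi_BYG"
  shows "m_crit (tL, dL, tR, dR) > 2 * dR"
proof -
  from assms have h1: "tL > dL + 1" and h2: "dL > 0" and h3: "tR < -(dR + 1)" and h4: "dR > 0"
    and hp: "phi (tL, dL, tR, dR) > 0"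
    by (auto simp: Phi_BYG_def Phi_def)
  define D where "D = sqrt (tL^2 - 4*dL)"
  define u where "u = lamLu tL dL"
  define s where "s = lamLs tL dL"
  have pos: "tL^2 - 4*dL > 0"
  proof -
    have "tL^2 > (dL+1)^2" using h1 h2 by (intro power_strict_mono) auto
    moreover have "(dL+1)^2 - 4*dL = (dL - 1)^2" by (simp add: power2_eq_square algebra_simps)
    ultimately show ?thesis by (smt (verit) zero_le_power2)
  qed
  have D0: "D \<ge> 0" unfolding D_def using pos by simp
  have DD: "D * D = tL^2 - 4*dL" unfolding D_def using pos by simp
  have u_def': "u = (tL + D)/2" and s_def': "s = (tL - D)/2"
    by (simp_all add: u_def s_def D_def lamLu_def lamLs_def)
  have sum: "u + s = tL" using u_def' s_def' by simp
  have prod: "u * s = dL"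
  proof -
    have "u * s = (tL*tL - D*D)/4" unfolding u_def' s_def' by (simp add: field_simps algebra_simps)
    then show ?thesis using DD by (simp add: power2_eq_square)
  qed
  have us: "u \<ge> s" using u_def' s_def' D0 by simp
  have "(1 - u) * (1 - s) < 0"
  proof -
    have "(1 - u) * (1 - s) = 1 - (u + s) + u * s" by (simp add: algebra_simps)
    then show ?thesis using sum prod h1 by simp
  qed
  then have u1: "u > 1" and s1: "s < 1" using us
    by (auto simp: mult_less_0_iff)
  have s0: "s > 0" using prod h2 u1
    by (metis less_trans zero_less_mult_pos zero_less_one)
  have F: "(1 - u) * dR + tR * (u * (u - 1)) + u * (u - dL) > 0"
  proof -
    have "phi (tL, dL, tR, dR) = dR - (tR + dL + dR - (1 + tR) * u) * u"
      by (simp add: phi_def u_def)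
    also have "\<dots> = (1 - u) * dR + tR * (u * (u - 1)) + u * (u - dL)"
      by (simp add: algebra_simps power2_eq_square)
    finally show ?thesis using hp by simp
  qed
  have uu: "u * (u - 1) > 0" using u1 by simp
  have "tR * (u * (u - 1)) < -(dR + 1) * (u * (u - 1))"
    using mult_strict_right_mono[OF h3 uu] by simp
  with F have G: "(1 - u) * dR - (dR + 1) * (u * (u - 1)) + u * (u - u * s) > 0"
    using prod by (simp add: algebra_simps)
  have G2: "2 * dR * (u^2 - 1) < 2*u - 2*u^2*s"
  proof -
    have "(1 - u) * dR - (dR + 1) * (u * (u - 1)) + u * (u - u * s)
          = (u - u^2 * s) - dR * (u^2 - 1)"
      by (simp add: algebra_simps power2_eq_square)
    then show ?thesis using G by simp
  qed
  have w: "u^2 - 1 > 0" using u1 by (smt (verit) one_less_power pos2)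
  have mc: "m_crit (tL, dL, tR, dR) = s + 2 * tL / (u^2 - 1)"
    by (simp add: m_crit_def u_def s_def)
  have "m_crit (tL, dL, tR, dR) * (u^2 - 1) = s * (u^2 - 1) + 2 * (u + s)"
    using mc w sum by (simp add: field_simps)
  moreover have "s * (u^2 - 1) + 2 * (u + s) - (2*u - 2*u^2*s) = s * (3 * u^2 + 1)"
    by (simp add: algebra_simps)
  moreover have "s * (3 * u^2 + 1) > 0" using s0 by (intro mult_pos_pos) (auto intro: add_nonneg_pos)
  ultimately have "m_crit (tL, dL, tR, dR) * (u^2 - 1) > 2 * dR * (u^2 - 1)"
    using G2 by linarith
  then show ?thesis using w by simp
qed

end
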